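(* Let $s>2$ be an integer, $A_s=\{0,1,\dots,s-1\}$, and let $A_0,A_1$ be disjoint subsets of $A_s$ with $A_0\cup A_1=A_s$, $A_0\neq A_s\neq A_1$. Let $f:[0,1]\to[0,1]$ be defined by $$f\big(\Delta^{s*}_{\alpha_1\alpha_2\dots\alpha_n\dots}\big)=\Delta^{2*}_{\beta_1\beta_2\dots\beta_n\dots},$$ where $\beta_1=0$ if $\alpha_1\in A_0$, $\beta_1=1$ if $\alpha_1\in A_1$, and for $n\ge 1$, $\beta_{n+1}=\beta_n$ if $\alpha_{n+1}=\alpha_n$ and $\beta_{n+1}=1-\beta_n$ if $\alpha_{n+1}\neq\alpha_n$. Then $f$ is nowhere monotonic: there is no open interval $(a,b)\subset[0,1]$ on which $f$ is monotone.
   Context: $L_s=A_s\times A_s\times\cdots$ denotes the space of sequences $(\alpha_n)$ with $\alpha_n\in A_s$. The $s*$-representation is an encoding of $[0,1]$ topologically equivalent to the classical $s$-adic one: there is a continuous strictly monotone surjection $h_s:[0,1]\to[0,1]$ such that $\Delta^{s*}_{\alpha_1\alpha_2\dots}=h_s\big(\sum_{n\ge1}\alpha_n s^{-n}\big)$ for every $(\alpha_n)\in L_s$. Likewise the $2*$-representation is given by a continuous strictly monotone surjection $h_2:[0,1]\to[0,1]$ via $\Delta^{2*}_{\beta_1\beta_2\dots}=h_2\big(\sum_{n\ge1}\beta_n 2^{-n}\big)$, $\beta_n\in\{0,1\}$. The value of $f(x)$ given by the formula does not depend on which $s*$-code of $x$ is used, so $f$ is a well-defined function on $[0,1]$. 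*)

theory Defs
  imports "HOL-Analysis.Analysis"
begin

text \<open>Sequences are indexed from 0: alpha 0 is the paper's alpha_1, etc.
  The binary digit sequence beta determined by the s-ary digit sequence alpha
  and the partition (A0, A1): beta_1 = 0 iff alpha_1 in A0 (equivalently 1 iff in A1),
  beta_{n+1} = beta_n if alpha_{n+1} = alpha_n, else 1 - beta_n.\<close>
fun beta_seq :: "nat set \<Rightarrow> (nat \<Rightarrow> nat) \<Rightarrow> nat \<Rightarrow> nat" where
  "beta_seq A1 \<alpha> 0 = (if \<alpha> 0 \<in> A1 then 1 else 0)"
| "beta_seq A1 \<alpha> (Suc n) =
     (if \<alpha> (Suc n) = \<alpha> n then beta_seq A1 \<alpha> n else 1 - beta_seq A1 \<alpha> n)"

definition digit_value :: "nat \<Rightarrow> (nat \<Rightarrow> nat) \<Rightarrow> real" where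
  "digit_value b d = (\<Sum>n. real (d n) / real b ^ Suc n)"

definition unit_homeo :: "(real \<Rightarrow> real) \<Rightarrow> bool" where
  "unit_homeo h \<longleftrightarrow> continuous_on {0..1} h \<and> h ` {0..1} = {0..1} \<and>
     (strict_mono_on {0..1} h \<or> monotone_on {0..1} (<) (>) h)"

end

theory Submission
  imports Defs
begin

lemma tail_sums:
  fixes B c :: real assumes B: "B > 1"
  shows "(\<lambda>i. if i < m then 0 else c / B ^ Suc i) sums (c / ((B - 1) * B ^ m))"
proof -
  have g: "(\<lambda>i. (1/B) ^ i) sums (1 / (1 - 1/B))"
    by (rule geometric_sums) (use B in auto)
  have "(\<lambda>i. c / B ^ Suc m * (1/B) ^ i) sums (c / B ^ Suc m * (1 / (1 - 1/B)))"
    by (rule sums_mult[OF g])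
  moreover have "(\<lambda>i. c / B ^ Suc m * (1/B) ^ i) = (\<lambda>i. (\<lambda>i. if i < m then 0 else c / B ^ Suc i) (i + m))"
    using B by (auto simp: fun_eq_iff power_add power_divide field_simps)
  moreover have "c / B ^ Suc m * (1 / (1 - 1/B)) = c / ((B - 1) * B ^ m)"
    using B by (simp add: field_simps)
  ultimately have "(\<lambda>i. (\<lambda>i. if i < m then 0 else c / B ^ Suc i) (i + m)) sums (c / ((B - 1) * B ^ m))"
    by metis
  then show ?thesis by (subst (asm) sums_iff_shift) simp
qed

lemma dv_summable:
  assumes B: "B > 1" and M: "\<And>i. d i \<le> M"
  shows "summable (\<lambda>i. real (d i) / real B ^ Suc i)"
proof (rule summable_comparison_test[where g="\<lambda>i. if i < 0 then 0 else real M / real B ^ Suc i"])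
  show "summable (\<lambda>i. if i < 0 then 0 else real M / real B ^ Suc i)"
    using tail_sums[of "real B" 0 "real M"] B by (auto intro: sums_summable)
  show "\<exists>N. \<forall>n\<ge>N. norm (real (d n) / real B ^ Suc n) \<le> (if n < 0 then 0 else real M / real B ^ Suc n)"
    using M B by (auto intro!: exI[of _ 0] divide_right_mono)
qed

lemma dv_diff:
  assumes B: "B > 1" and "\<And>i. x i \<le> M" "\<And>i. y i \<le> M"
  shows "digit_value B x - digit_value B y = (\<Sum>i. (real (x i) - real (y i)) / real B ^ Suc i)"
  unfolding digit_value_def
  by (subst suminf_diff) (use dv_summable[OF B] assms in \<open>auto simp: diff_divide_distrib\<close>)

lemma dv_mono:
  assumes B: "B > 1" and "\<And>i. x i \<le> M" "\<And>i. y i \<le> M" "\<And>i. x i \<le> y i"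
  shows "digit_value B x \<le> digit_value B y"
  unfolding digit_value_def
  by (rule suminf_le) (use dv_summable[OF B] assms in \<open>auto intro: divide_right_mono\<close>)

lemma dv_unit:
  assumes B: "B > 1" and d: "\<And>i. d i \<le> B - 1"
  shows "0 \<le> digit_value B d \<and> digit_value B d \<le> 1"
proof
  show "0 \<le> digit_value B d" unfolding digit_value_def
    by (rule suminf_nonneg) (use dv_summable[OF B d] in auto)
  have "digit_value B d \<le> digit_value B (\<lambda>_. B - 1)"
    by (rule dv_mono[OF B]) (use d in auto)
  also have "\<dots> = 1"
    using sums_unique[OF tail_sums[of "real B" 0 "real (B - 1)"]] B
    by (simp add: digit_value_def of_nat_diff)
  finally show "digit_value B d \<le> 1" .
qed

lemma prefix_exists:
  assumes s: "s > 0"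
  shows "k < s ^ n \<Longrightarrow> \<exists>pre. (\<forall>i<n. pre i < s) \<and> (\<Sum>i<n. real (pre i) / real s ^ Suc i) = real k / real s ^ n"
proof (induction n arbitrary: k)
  case 0 then show ?case by auto
next
  case (Suc n)
  have "k div s < s ^ n" using Suc.prems s
    by (metis div_less_iff_less_mult mult.commute power_Suc)
  then obtain pre where pre: "\<forall>i<n. pre i < s" "(\<Sum>i<n. real (pre i) / real s ^ Suc i) = real (k div s) / real s ^ n"
    using Suc.IH by blast
  define pre' where "pre' = pre(n := k mod s)"
  have "(\<Sum>i<Suc n. real (pre' i) / real s ^ Suc i) = (\<Sum>i<n. real (pre i) / real s ^ Suc i) + real (k mod s) / real s ^ Suc n"
    by (simp add: pre'_def)
  also have "\<dots> = (real s * real (k div s) + real (k mod s)) / real s ^ Suc n"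
    using pre(2) s by (simp add: field_simps)
  also have "real s * real (k div s) + real (k mod s) = real k"
    by (metis div_mult_mod_eq mult.commute of_nat_add of_nat_mult)
  finally show ?case using pre(1) s by (intro exI[of _ pre']) (auto simp: pre'_def)
qed


lemma beta_le1: "beta_seq A \<alpha> i \<le> 1"
  by (induction i) auto

lemma beta_prefix: "(\<forall>j\<le>i. \<alpha> j = \<alpha>' j) \<Longrightarrow> beta_seq A \<alpha> i = beta_seq A \<alpha>' i"
  by (induction i) auto

lemma beta_const:
  assumes h: "\<forall>j\<ge>n. \<alpha> j = \<alpha> n"
  shows "beta_seq A \<alpha> (n + j) = beta_seq A \<alpha> n"
proof (induction j)
  case 0 then show ?case by simp
next
  case (Suc j)
  have "\<alpha> (Suc (n + j)) = \<alpha> (n + j)"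
    using h[rule_format, of "Suc (n + j)"] h[rule_format, of "n + j"] by simp
  then show ?case using Suc by simp
qed

theorem theorem3:
  fixes s :: nat and A0 A1 :: "nat set" and hs h2 f :: "real \<Rightarrow> real"
  assumes "s > 2"
    and "A0 \<inter> A1 = {}" and "A0 \<union> A1 = {0..<s}"
    and "A0 \<noteq> {0..<s}" and "A1 \<noteq> {0..<s}"
    and "unit_homeo hs" and "unit_homeo h2"
    and f_def: "\<And>\<alpha>. (\<forall>n. \<alpha> n \<in> {0..<s}) \<Longrightarrow>
        f (hs (digit_value s \<alpha>)) = h2 (digit_value 2 (beta_seq A1 \<alpha>))"
  shows "\<not> (\<exists>a b. 0 \<le> a \<and> a < b \<and> b \<le> 1 \<and>
             (mono_on {a<..<b} f \<or> antimono_on {a<..<b} f))"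
proof
  assume "\<exists>a b. 0 \<le> a \<and> a < b \<and> b \<le> 1 \<and> (mono_on {a<..<b} f \<or> antimono_on {a<..<b} f)"
  then obtain a b where ab: "0 \<le> a" "a < b" "b \<le> 1"
    and mon: "mono_on {a<..<b} f \<or> antimono_on {a<..<b} f" by blast
  have s2: "s > 2" by fact
  have s1: "real s > 1" using s2 by simp
  have hs_cont: "continuous_on {0..1} hs" and hs_img: "hs ` {0..1} = {0..1}"
    and hs_str: "strict_mono_on {0..1} hs \<or> monotone_on {0..1} (<) (>) hs"
    using \<open>unit_homeo hs\<close> unfolding unit_homeo_def by auto
  have h2_str: "strict_mono_on {0..1} h2 \<or> monotone_on {0..1} (<) (>) h2"
    using \<open>unit_homeo h2\<close> unfolding unit_homeo_def by auto
  have h2_lt: "h2 x \<noteq> h2 y" if "x \<in> {0..1}" "y \<in> {0..1}" "x < y" for x y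
  proof -
    from h2_str show ?thesis
    proof
      assume "strict_mono_on {0..1} h2"
      from monotone_onD[OF this that] show ?thesis by simp
    next
      assume "monotone_on {0..1} (<) (>) h2"
      from monotone_onD[OF this that] show ?thesis by simp
    qed
  qed
  have h2_inj: "h2 x \<noteq> h2 y" if "x \<in> {0..1}" "y \<in> {0..1}" "x \<noteq> y" for x y
  proof (cases "x < y")
    case True then show ?thesis using h2_lt that by blast
  next
    case False then have "y < x" using that by auto
    then show ?thesis using h2_lt[of y x] that by auto
  qed
  define m where "m = (a + b) / 2"
  have "m \<in> {0..1}" using ab by (auto simp: m_def)
  then obtain u0 where u0: "u0 \<in> {0..1}" "hs u0 = m" using hs_img by (metis imageE)
  have "(b - a) / 2 > 0" using ab by simp
  then obtain \<delta> where \<delta>: "\<delta> > 0" "\<forall>u\<in>{0..1}. dist u u0 < \<delta> \<longrightarrow> dist (hs u) (hs u0) < (b - a) / 2"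
    using hs_cont u0(1) unfolding continuous_on_iff by metis
  define p where "p = max 0 (u0 - \<delta>)"
  define q where "q = min 1 (u0 + \<delta>)"
  have pq: "0 \<le> p" "p < q" "q \<le> 1" using u0 \<delta> by (auto simp: p_def q_def)
  have inside: "hs u \<in> {a<..<b}" if "p < u" "u < q" for u
  proof -
    have "u \<in> {0..1}" "dist u u0 < \<delta>" using that pq by (auto simp: p_def q_def dist_real_def)
    then have "dist (hs u) m < (b - a) / 2" using \<delta> u0 by auto
    then show ?thesis by (auto simp: dist_real_def m_def abs_less_iff field_simps)
  qed
  obtain N where N: "2 / (q - p) < real s ^ N" using real_arch_pow[OF s1] by blast
  define n where "n = Suc N"
  have "real s ^ N \<le> real s ^ n" unfolding n_def using s1 by simp
  have qp: "q - p > 0" using pq by simp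
  have "2 < real s ^ N * (q - p)" using N qp by (simp add: pos_divide_less_eq)
  also have "\<dots> \<le> real s ^ n * (q - p)" using \<open>real s ^ N \<le> real s ^ n\<close> qp by (intro mult_right_mono) auto
  finally have sn: "2 < real s ^ n * (q - p)" .
  have snpos: "real s ^ n > 0" using s1 by simp
  define k where "k = nat (floor (p * real s ^ n)) + 1"
  have fl: "real (nat (floor (p * real s ^ n))) = of_int (floor (p * real s ^ n))"
    using pq snpos by simp
  have kr: "real k = of_int (floor (p * real s ^ n)) + 1" using fl by (simp add: k_def)
  have "p * real s ^ n < real k" using kr by linarith
  then have k1: "p < real k / real s ^ n" using snpos by (simp add: pos_less_divide_eq)
  have "real k + 1 \<le> p * real s ^ n + 2" using kr by linarith
  also have "\<dots> < q * real s ^ n" using sn by (simp add: algebra_simps)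
  finally have kq: "real k + 1 < q * real s ^ n" .
  then have k2: "(real k + 1) / real s ^ n < q" using snpos by (simp add: pos_divide_less_eq)
  have "real k < real s ^ n" using kq pq snpos
    by (smt (verit) mult_left_le_one_le)
  then have k3: "k < s ^ n" by (metis of_nat_less_iff of_nat_power)
  obtain pre where pre: "\<forall>i<n. pre i < s" "(\<Sum>i<n. real (pre i) / real s ^ Suc i) = real k / real s ^ n"
    using prefix_exists[OF _ k3] s2 by auto
  define c where "c = pre (n - 1)"
  obtain d e where de: "d < e" "e < s" "d \<noteq> c" "e \<noteq> c"
  proof (cases "c = 0")
    case True then show ?thesis using that[of 1 2] s2 by auto
  next
    case False then show ?thesis
      using that[of 0 1] that[of 0 2] s2 by (cases "c = 1") auto
  qed
  define \<alpha>1 where "\<alpha>1 = (\<lambda>i. if i < n then pre i else d)"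
  define \<alpha>2 where "\<alpha>2 = (\<lambda>i. if i < n then pre i else if i = n then d else e)"
  define \<alpha>3 where "\<alpha>3 = (\<lambda>i. if i < n then pre i else e)"
  define \<alpha>0 where "\<alpha>0 = (\<lambda>i. if i < n then pre i else 0)"
  define \<alpha>M where "\<alpha>M = (\<lambda>i. if i < n then pre i else s - 1)"
  have b1: "\<alpha>1 i \<le> s - 1" "\<alpha>2 i \<le> s - 1" "\<alpha>3 i \<le> s - 1" "\<alpha>0 i \<le> s - 1" "\<alpha>M i \<le> s - 1" for i
  proof -
    have "pre i \<le> s - 1" if "i < n" for i using pre(1) that s2 by fastforce
    then show "\<alpha>1 i \<le> s - 1" "\<alpha>2 i \<le> s - 1" "\<alpha>3 i \<le> s - 1" "\<alpha>0 i \<le> s - 1" "\<alpha>M i \<le> s - 1"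
      using de by (auto simp: \<alpha>1_def \<alpha>2_def \<alpha>3_def \<alpha>0_def \<alpha>M_def)
  qed
  have sB: "s > 1" using s2 by simp
  define u1 u2 u3 where "u1 = digit_value s \<alpha>1" "u2 = digit_value s \<alpha>2" "u3 = digit_value s \<alpha>3"
  have P: "digit_value s \<alpha>0 = real k / real s ^ n"
    unfolding digit_value_def using pre(2)
    by (subst suminf_finite[of "{..<n}"]) (auto simp: \<alpha>0_def)
  have PM: "digit_value s \<alpha>M - digit_value s \<alpha>0 = 1 / real s ^ n"
  proof -
    have "digit_value s \<alpha>M - digit_value s \<alpha>0 = (\<Sum>i. if i < n then 0 else real (s - 1) / real s ^ Suc i)"
      by (subst dv_diff[OF sB b1(5) b1(4)]) (auto simp: \<alpha>M_def \<alpha>0_def intro!: suminf_cong)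
    also have "\<dots> = real (s - 1) / ((real s - 1) * real s ^ n)"
      by (rule sums_unique[symmetric, OF tail_sums]) (use s1 in auto)
    also have "\<dots> = 1 / real s ^ n" using s2 by (simp add: of_nat_diff)
    finally show ?thesis .
  qed
  have range: "p < digit_value s \<alpha> \<and> digit_value s \<alpha> < q"
    if "\<And>i. \<alpha> i \<le> s - 1" "\<And>i. i < n \<Longrightarrow> \<alpha> i = pre i" for \<alpha>
  proof -
    have t1: "\<alpha> i \<le> s - Suc 0" for i using that(1)[of i] by simp
    have "digit_value s \<alpha>0 \<le> digit_value s \<alpha>"
      by (rule dv_mono[OF sB b1(4) that(1)]) (auto simp: \<alpha>0_def that(2))
    moreover have "digit_value s \<alpha> \<le> digit_value s \<alpha>M"
      by (rule dv_mono[OF sB that(1) b1(5)]) (auto simp: \<alpha>M_def that(2) t1)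
    ultimately show ?thesis using P PM k1 k2 snpos by (auto simp: add_divide_distrib)
  qed
  have u_in: "p < u1 \<and> u1 < q" "p < u2 \<and> u2 < q" "p < u3 \<and> u3 < q"
    unfolding u1_u2_u3_def by (rule range; use b1 in \<open>auto simp: \<alpha>1_def \<alpha>2_def \<alpha>3_def\<close>)+
  have u12: "u1 < u2"
  proof -
    have "u2 - u1 = (\<Sum>i. if i < Suc n then 0 else (real e - real d) / real s ^ Suc i)"
      unfolding u1_u2_u3_def
      by (subst dv_diff[OF sB b1(2) b1(1)]) (auto simp: \<alpha>1_def \<alpha>2_def intro!: suminf_cong)
    also have "\<dots> = (real e - real d) / ((real s - 1) * real s ^ Suc n)"
      by (rule sums_unique[symmetric, OF tail_sums]) (use s1 in auto)
    also have "\<dots> > 0" using de s1 by (intro divide_pos_pos mult_pos_pos) auto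
    finally show ?thesis by simp
  qed
  have u23: "u2 < u3"
  proof -
    have "u3 - u2 = (\<Sum>i. if i = n then (real e - real d) / real s ^ Suc n else 0)"
      unfolding u1_u2_u3_def
      by (subst dv_diff[OF sB b1(3) b1(2)]) (auto simp: \<alpha>3_def \<alpha>2_def intro!: suminf_cong)
    also have "\<dots> = (real e - real d) / real s ^ Suc n"
      by (rule sums_unique[symmetric]) (rule sums_single)
    also have "\<dots> > 0" using de s1 by (intro divide_pos_pos) auto
    finally show ?thesis by simp
  qed
  define \<beta>1 \<beta>2 \<beta>3 where "\<beta>1 = beta_seq A1 \<alpha>1" "\<beta>2 = beta_seq A1 \<alpha>2" "\<beta>3 = beta_seq A1 \<alpha>3"
  have n1: "n \<ge> 1" by (simp add: n_def)
  have \<beta>13: "\<beta>1 = \<beta>3"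
  proof
    fix i show "\<beta>1 i = \<beta>3 i"
    proof (induction i)
      case 0 then show ?case using n1 by (simp add: u1_u2_u3_def \<beta>1_\<beta>2_\<beta>3_def \<alpha>1_def \<alpha>3_def)
    next
      case (Suc i)
      have "Suc i < n \<or> Suc i = n \<or> Suc i > n" by auto
      then show ?case
      proof (elim disjE)
        assume "Suc i = n"
        then have i: "i = n - 1" "i < n" by simp_all
        have a1: "\<alpha>1 (Suc i) = d" "\<alpha>1 i = c" "\<alpha>3 (Suc i) = e" "\<alpha>3 i = c"
          using i \<open>Suc i = n\<close> by (simp_all add: \<alpha>1_def \<alpha>3_def c_def)
        show ?case unfolding \<beta>1_\<beta>2_\<beta>3_def beta_seq.simps(2) a1
          using Suc de by (simp add: \<beta>1_\<beta>2_\<beta>3_def)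
      qed (use Suc in \<open>auto simp: \<beta>1_\<beta>2_\<beta>3_def \<alpha>1_def \<alpha>3_def\<close>)
    qed
  qed
  have \<beta>12n: "\<beta>2 n = \<beta>1 n" unfolding \<beta>1_\<beta>2_\<beta>3_def
    by (rule beta_prefix) (auto simp: \<alpha>1_def \<alpha>2_def)
  have \<beta>1c: "\<beta>1 (n + j) = \<beta>1 n" for j unfolding \<beta>1_\<beta>2_\<beta>3_def
    by (rule beta_const) (auto simp: \<alpha>1_def)
  have \<beta>2c: "\<beta>2 (Suc n + j) = \<beta>2 (Suc n)" for j unfolding \<beta>1_\<beta>2_\<beta>3_def
    by (rule beta_const) (auto simp: \<alpha>2_def)
  have \<beta>2s: "\<beta>2 (Suc n) = 1 - \<beta>2 n" using de by (simp add: \<beta>1_\<beta>2_\<beta>3_def \<alpha>2_def)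
  define B where "B = \<beta>1 n"
  have B01: "B \<le> 1" unfolding B_def \<beta>1_\<beta>2_\<beta>3_def by (rule beta_le1)
  have bd: "\<beta>1 i \<le> 2 - 1" "\<beta>2 i \<le> 2 - 1" for i unfolding \<beta>1_\<beta>2_\<beta>3_def using beta_le1 by (simp_all add: numeral_2_eq_2)
  have G12: "digit_value 2 \<beta>1 \<noteq> digit_value 2 \<beta>2"
  proof -
    have eq: "real (\<beta>1 i) - real (\<beta>2 i) = (if i < Suc n then 0 else 2 * real B - 1)" for i
    proof (cases "i < Suc n")
      case True
      then have "\<beta>1 i = \<beta>2 i" unfolding \<beta>1_\<beta>2_\<beta>3_def
        by (intro beta_prefix) (auto simp: \<alpha>1_def \<alpha>2_def)
      then show ?thesis using True by simp
    next
      case False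
      then obtain j where j: "i = Suc n + j" by (metis le_Suc_ex not_less)
      have "\<beta>1 i = B" using \<beta>1c[of "Suc j"] j by (simp add: B_def)
      moreover have "\<beta>2 i = 1 - B" using \<beta>2c[of j] j \<beta>2s \<beta>12n by (simp add: B_def)
      ultimately show ?thesis using False B01 by (simp add: of_nat_diff)
    qed
    have "digit_value 2 \<beta>1 - digit_value 2 \<beta>2 = (\<Sum>i. if i < Suc n then 0 else (2 * real B - 1) / 2 ^ Suc i)"
      by (subst dv_diff[of 2, OF _ bd(1) bd(2)]) (auto simp: eq intro!: suminf_cong)
    also have "\<dots> = (2 * real B - 1) / ((2 - 1) * 2 ^ Suc n)"
      by (rule sums_unique[symmetric, OF tail_sums]) auto
    also have "\<dots> \<noteq> 0"
    proof -
      have "2 * real B - 1 \<noteq> 0"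
      proof
        assume "2 * real B - 1 = 0" then have "real B * 2 = 1" by simp
        then show False using B01 by (cases B) auto
      qed
      then show ?thesis by simp
    qed
    finally show ?thesis by simp
  qed
  have G_unit: "digit_value 2 \<beta>1 \<in> {0..1}" "digit_value 2 \<beta>2 \<in> {0..1}"
    using dv_unit[of 2 \<beta>1] dv_unit[of 2 \<beta>2] bd by auto
  have dig: "\<forall>i. \<alpha>1 i \<in> {0..<s}" "\<forall>i. \<alpha>2 i \<in> {0..<s}" "\<forall>i. \<alpha>3 i \<in> {0..<s}"
  proof -
    have "x \<le> s - 1 \<Longrightarrow> x \<in> {0..<s}" for x using s2 by auto
    then show "\<forall>i. \<alpha>1 i \<in> {0..<s}" "\<forall>i. \<alpha>2 i \<in> {0..<s}" "\<forall>i. \<alpha>3 i \<in> {0..<s}"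
      using b1 by blast+
  qed
  define y1 y2 y3 where "y1 = hs u1" "y2 = hs u2" "y3 = hs u3"
  have fy1: "f y1 = h2 (digit_value 2 \<beta>1)" "f y2 = h2 (digit_value 2 \<beta>2)" "f y3 = h2 (digit_value 2 \<beta>1)"
    using f_def[OF dig(1)] f_def[OF dig(2)] f_def[OF dig(3)] \<beta>13
    by (simp_all add: y1_y2_y3_def u1_u2_u3_def \<beta>1_\<beta>2_\<beta>3_def)
  have fne: "f y2 \<noteq> f y1" using h2_inj[OF G_unit(2) G_unit(1)] G12 fy1 by auto
  have yin: "y1 \<in> {a<..<b}" "y2 \<in> {a<..<b}" "y3 \<in> {a<..<b}"
    using inside u_in by (auto simp: y1_y2_y3_def)
  have uu: "u1 \<in> {0..1}" "u2 \<in> {0..1}" "u3 \<in> {0..1}" using u_in pq by auto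
  have ord: "(y1 < y2 \<and> y2 < y3) \<or> (y3 < y2 \<and> y2 < y1)"
    using hs_str
  proof
    assume h: "strict_mono_on {0..1} hs"
    show ?thesis using monotone_onD[OF h uu(1,2) u12] monotone_onD[OF h uu(2,3) u23]
      by (simp add: y1_y2_y3_def)
  next
    assume h: "monotone_on {0..1} (<) (>) hs"
    show ?thesis using monotone_onD[OF h uu(1,2) u12] monotone_onD[OF h uu(2,3) u23]
      by (simp add: y1_y2_y3_def)
  qed
  have f13: "f y3 = f y1" using fy1 by simp
  from mon show False
  proof
    assume h: "mono_on {a<..<b} f"
    from ord show False
    proof
      assume "y1 < y2 \<and> y2 < y3"
      then have "f y1 \<le> f y2" "f y2 \<le> f y3"
        using monotone_onD[OF h yin(1,2)] monotone_onD[OF h yin(2,3)] by auto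
      then show False using fne f13 by linarith
    next
      assume "y3 < y2 \<and> y2 < y1"
      then have "f y3 \<le> f y2" "f y2 \<le> f y1"
        using monotone_onD[OF h yin(3,2)] monotone_onD[OF h yin(2,1)] by auto
      then show False using fne f13 by linarith
    qed
  next
    assume h: "antimono_on {a<..<b} f"
    from ord show False
    proof
      assume "y1 < y2 \<and> y2 < y3"
      then have "f y2 \<le> f y1" "f y3 \<le> f y2"
        using monotone_onD[OF h yin(1,2)] monotone_onD[OF h yin(2,3)] by auto
      then show False using fne f13 by linarith
    next
      assume "y3 < y2 \<and> y2 < y1"
      then have "f y2 \<le> f y3" "f y1 \<le> f y2"
        using monotone_onD[OF h yin(3,2)] monotone_onD[OF h yin(2,1)] by auto
      then show False using fne f13 by linarith
    qed
  qed
qed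

end
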